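(* Let $\lambda^1,\dots,\lambda^N$ be loss functions such that each $\lambda^n$ is proper and $\eta^n$-mixable for some $\eta^n>0$. Consider the game: set $L_0^{(n)}:=0$, $L_0^n:=0$; at each step $t=1,2,\dots$, each Expert $n$ announces $\gamma_t^n\in[0,1]$, then Learner announces $\gamma_t\in[0,1]$, then Reality announces $\omega_t\in\{0,1\}$, and $L_t^{(n)}:=L_{t-1}^{(n)}+\lambda^n(\gamma_t,\omega_t)$, $L_t^n:=L_{t-1}^n+\lambda^n(\gamma_t^n,\omega_t)$ for $n=1,\dots,N$. Then Learner has a strategy guaranteeing, for all $T$ and all $n=1,\dots,N$, $$L_T^{(n)}\le L_T^n+\frac{\ln N}{\eta^n}.$$
   Context: A loss function is a map $\lambda:[0,1]\times\{0,1\}\to[0,\infty]$ satisfying: (1) $\lambda(\gamma,0)$ and $\lambda(\gamma,1)$ are continuous in $\gamma\in[0,1]$ (standard topology on $[0,\infty]$); (2) some $\gamma$ has $\lambda(\gamma,0),\lambda(\gamma,1)$ both finite; (3) no $\gamma$ has both infinite. Superprediction set: $\Sigma_\lambda=\{(x,y)\in[0,\infty)^2:\exists\gamma\ \lambda(\gamma,0)\le x,\ \lambda(\gamma,1)\le y\}$. For $\eta>0$, $\lambda$ is $\eta$-mixable if $\{(e^{-\eta x},e^{-\eta y}):(x,y)\in\Sigma_\lambda\}$ is convex. $\lambda$ is proper if $\pi\lambda(\pi,1)+(1-\pi)\lambda(\pi,0)\le\pi\lambda(\pi',1)+(1-\pi)\lambda(\pi',0)$ for all $\pi,\pi'\in[0,1]$.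 *)

theory Defs
  imports "HOL-Analysis.Analysis" "HOL-Library.Extended_Nonnegative_Real"
begin

text \<open>Outcomes: False stands for 0, True for 1. Losses take values in [0,\<infinity>] = ennreal.
  A loss function is given as a map on real \<times> bool, only its values on [0,1] matter.\<close>

definition loss_function :: "(real \<Rightarrow> bool \<Rightarrow> ennreal) \<Rightarrow> bool" where
  "loss_function lam \<longleftrightarrow>
     continuous_on {0..1} (\<lambda>g. lam g False) \<and>
     continuous_on {0..1} (\<lambda>g. lam g True) \<and>
     (\<exists>g\<in>{0..1}. lam g False < \<infinity> \<and> lam g True < \<infinity>) \<and>
     \<not> (\<exists>g\<in>{0..1}. lam g False = \<infinity> \<and> lam g True = \<infinity>)"

definition superpred :: "(real \<Rightarrow> bool \<Rightarrow> ennreal) \<Rightarrow> (real \<times> real) set" where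
  "superpred lam = {(x, y). 0 \<le> x \<and> 0 \<le> y \<and>
     (\<exists>g\<in>{0..1}. lam g False \<le> ennreal x \<and> lam g True \<le> ennreal y)}"

definition mixable :: "(real \<Rightarrow> bool \<Rightarrow> ennreal) \<Rightarrow> real \<Rightarrow> bool" where
  "mixable lam eta \<longleftrightarrow>
     convex ((\<lambda>(x, y). (exp (- eta * x), exp (- eta * y))) ` superpred lam)"

definition proper_loss :: "(real \<Rightarrow> bool \<Rightarrow> ennreal) \<Rightarrow> bool" where
  "proper_loss lam \<longleftrightarrow>
     (\<forall>p\<in>{0..1}. \<forall>p'\<in>{0..1}.
        ennreal p * lam p True + ennreal (1 - p) * lam p False
        \<le> ennreal p * lam p' True + ennreal (1 - p) * lam p' False)"

text \<open>A Learner strategy: S t g w is Learner's prediction at step t, where g s n is the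
  prediction of Expert n at step s and w s the outcome at step s.\<close>

definition learner_strategy :: "nat \<Rightarrow> (nat \<Rightarrow> (nat \<Rightarrow> nat \<Rightarrow> real) \<Rightarrow> (nat \<Rightarrow> bool) \<Rightarrow> real) \<Rightarrow> bool" where
  "learner_strategy N S \<longleftrightarrow>
     (\<forall>t g w. S t g w \<in> {0..1}) \<and>
     (\<forall>t g g' w w'. (\<forall>s\<in>{1..t}. \<forall>n\<in>{1..N}. g s n = g' s n) \<and> (\<forall>s\<in>{1..<t}. w s = w' s)
        \<longrightarrow> S t g w = S t g' w')"

end

theory Submission
  imports Defs
begin


definition ephi :: "real \<Rightarrow> ennreal \<Rightarrow> real" where
  "ephi eta x = (if x = top then 0 else exp (- eta * enn2real x))"

lemma ephi_nonneg: "0 \<le> ephi eta x" by (simp add: ephi_def)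

lemma ephi_pos: "x \<noteq> top \<Longrightarrow> 0 < ephi eta x" by (simp add: ephi_def)

lemma ephi_zero_iff: "ephi eta x = 0 \<longleftrightarrow> x = top" by (simp add: ephi_def)

lemma ephi_cont:
  assumes eta: "eta > 0"
  shows "continuous_on UNIV (ephi eta)"
proof (rule continuous_at_imp_continuous_on, intro ballI)
  fix x :: ennreal
  show "isCont (ephi eta) x"
  proof (cases "x = top")
    case False
    then obtain r where r: "x = ennreal r" "r \<ge> 0" by (cases x) auto
    have lim: "((\<lambda>y. y) \<longlongrightarrow> x) (at x)" by (rule tendsto_ident_at)
    have ev: "eventually (\<lambda>y. y < top) (at x)"
      using lim False by (simp add: order_tendsto_iff top.not_eq_extremum)
    have "((\<lambda>y. exp (- eta * enn2real y)) \<longlongrightarrow> exp (- eta * r)) (at x)"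
      using lim r by (auto intro!: tendsto_intros)
    moreover have "ephi eta x = exp (- eta * r)" using r by (simp add: ephi_def)
    ultimately have "((\<lambda>y. exp (- eta * enn2real y)) \<longlongrightarrow> ephi eta x) (at x)" by simp
    then show ?thesis unfolding isCont_def
      by (rule Lim_transform_eventually) (use ev in \<open>auto elim!: eventually_mono simp: ephi_def\<close>)
  next
    case True
    have lim: "((\<lambda>y. y) \<longlongrightarrow> x) (at x)" by (rule tendsto_ident_at)
    show ?thesis unfolding isCont_def True
    proof (rule tendstoI)
      fix e :: real assume e: "e > 0"
      define M where "M = max 0 (- ln e / eta)"
      have M: "M \<ge> 0" "exp (- eta * M) \<le> e"
      proof -
        show "M \<ge> 0" by (simp add: M_def)
        have "- eta * M \<le> ln e" using eta by (simp add: M_def field_simps max_def)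
        then have "exp (- eta * M) \<le> exp (ln e)" by simp
        then show "exp (- eta * M) \<le> e" using e by simp
      qed
      have "eventually (\<lambda>y. ennreal M < y) (at x)"
        using lim True by (simp add: order_tendsto_iff)
      then show "eventually (\<lambda>y. dist (ephi eta y) (ephi eta top) < e) (at top)"
        unfolding True[symmetric]
      proof (rule eventually_mono)
        fix y assume y: "ennreal M < y"
        show "dist (ephi eta y) (ephi eta x) < e"
        proof (cases "y = top")
          case True then show ?thesis using e \<open>x = top\<close> by (simp add: ephi_def)
        next
          case False
          then obtain s where s: "y = ennreal s" "s \<ge> 0" by (cases y) auto
          have "M < s" using y s M by (simp add: ennreal_less_iff)
          then have "exp (- eta * s) < exp (- eta * M)" using eta by simp
          then have "exp (- eta * s) < e" using M by linarith
          then show ?thesis using s \<open>x = top\<close> by (simp add: ephi_def)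
        qed
      qed
    qed
  qed
qed



lemma ln_lower:
  fixes z :: real assumes "\<bar>z\<bar> \<le> 1/2" shows "ln (1 + z) \<ge> z - 2 * z\<^sup>2"
  using abs_ln_one_plus_x_minus_x_bound[OF assms] by linarith

lemma real_key:
  fixes a0 a1 b0 b1 p :: real
  assumes a: "a0 > 0" "a1 > 0" and b: "b0 > 0" "b1 > 0" and p: "0 < p" "p < 1"
    and H: "\<And>t. 0 < t \<Longrightarrow> t \<le> 1 \<Longrightarrow>
      p * ln ((1-t)*a1 + t*b1) + (1-p) * ln ((1-t)*a0 + t*b0) \<le> p * ln a1 + (1-p) * ln a0"
  shows "p * b1 / a1 + (1-p) * b0 / a0 \<le> 1"
proof -
  define d0 where "d0 = b0/a0 - 1"
  define d1 where "d1 = b1/a1 - 1"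
  define D where "D = p * d1 + (1-p) * d0"
  define M where "M = \<bar>d0\<bar> + \<bar>d1\<bar> + 1"
  have M1: "M \<ge> 1" by (simp add: M_def)
  have bnd: "D \<le> 2 * t * M\<^sup>2" if t: "0 < t" "t \<le> 1/(2*M)" for t
  proof -
    have "M * (t * 2) \<le> 1" using t M1 by (simp add: field_simps)
    moreover have "1 * (t*2) \<le> M * (t * 2)" using M1 t by (intro mult_right_mono) auto
    ultimately have t1: "t \<le> 1" by linarith
    have e0: "(1-t)*a0 + t*b0 = a0 * (1 + t*d0)" using a by (simp add: d0_def field_simps)
    have e1: "(1-t)*a1 + t*b1 = a1 * (1 + t*d1)" using a by (simp add: d1_def field_simps)
    have pos0: "1 + t*d0 > 0"
    proof -
      have "(1-t)*a0 + t*b0 > 0" using t t1 a b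
        by (smt (verit) mult_nonneg_nonneg mult_pos_pos)
      then show ?thesis using e0 a by (simp add: zero_less_mult_iff)
    qed
    have pos1: "1 + t*d1 > 0"
    proof -
      have "(1-t)*a1 + t*b1 > 0" using t t1 a b
        by (smt (verit) mult_nonneg_nonneg mult_pos_pos)
      then show ?thesis using e1 a by (simp add: zero_less_mult_iff)
    qed
    have H': "p * ln (1 + t*d1) + (1-p) * ln (1 + t*d0) \<le> 0"
    proof -
      have "ln (a0 * (1 + t*d0)) = ln a0 + ln (1 + t*d0)" using a pos0 by (simp add: ln_mult)
      moreover have "ln (a1 * (1 + t*d1)) = ln a1 + ln (1 + t*d1)" using a pos1 by (simp add: ln_mult)
      ultimately show ?thesis using H[OF t(1) t1] unfolding e0 e1 by (simp add: algebra_simps)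
    qed
    have sm: "\<bar>t*d\<bar> \<le> 1/2" if "\<bar>d\<bar> \<le> M" for d
    proof -
      have "\<bar>t*d\<bar> = t * \<bar>d\<bar>" using t by (simp add: abs_mult)
      also have "\<dots> \<le> t * M" using that t by (simp add: mult_left_mono)
      also have "\<dots> \<le> 1/2" using t M1 by (simp add: field_simps)
      finally show ?thesis .
    qed
    have dM0: "\<bar>d0\<bar> \<le> M" and dM1: "\<bar>d1\<bar> \<le> M" by (auto simp: M_def)
    have sq: "(t*d)\<^sup>2 \<le> (t*M)\<^sup>2" if "\<bar>d\<bar> \<le> M" for d
    proof -
      have "\<bar>t*d\<bar> \<le> \<bar>t*M\<bar>" using that t M1 by (simp add: abs_mult mult_left_mono)
      then show ?thesis by (metis abs_le_square_iff)
    qed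
    have l0: "ln (1 + t*d0) \<ge> t*d0 - 2*(t*M)\<^sup>2"
      using ln_lower[OF sm[OF dM0]] sq[OF dM0] by linarith
    have l1: "ln (1 + t*d1) \<ge> t*d1 - 2*(t*M)\<^sup>2"
      using ln_lower[OF sm[OF dM1]] sq[OF dM1] by linarith
    have "p * (t*d1 - 2*(t*M)\<^sup>2) + (1-p) * (t*d0 - 2*(t*M)\<^sup>2) \<le> 0"
      using H' mult_left_mono[OF l0, of "1-p"] mult_left_mono[OF l1, of p] p by linarith
    then have "t * D \<le> t * (2 * t * M\<^sup>2)"
      by (simp add: D_def algebra_simps power2_eq_square)
    then show ?thesis using t by simp
  qed
  have "D \<le> 0"
  proof (rule ccontr)
    assume "\<not> D \<le> 0"
    then have D: "D > 0" by simp
    define t where "t = min (1/(2*M)) (D/(4*M\<^sup>2))"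
    have t: "0 < t" "t \<le> 1/(2*M)" using D M1 by (auto simp: t_def)
    have "t \<le> D/(4*M\<^sup>2)" by (simp add: t_def)
    then have "2 * t * M\<^sup>2 \<le> D/2" using M1 by (simp add: field_simps)
    then show False using bnd[OF t] D by linarith
  qed
  then show ?thesis using a by (simp add: D_def d0_def d1_def field_simps)
qed



lemma fin_witness:
  assumes "loss_function lam"
  obtains g0 where "g0 \<in> {0..1}" "lam g0 False < top" "lam g0 True < top"
  using assms unfolding loss_function_def by auto

lemma fin_interior:
  assumes LF: "loss_function lam" and PR: "proper_loss lam" and p: "0 < p" "p < 1"
  shows "lam p True \<noteq> top \<and> lam p False \<noteq> top"
proof -
  obtain g0 where g0: "g0 \<in> {0..1}" "lam g0 False < top" "lam g0 True < top"
    using fin_witness[OF LF] by blast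
  have le: "ennreal p * lam p True + ennreal (1 - p) * lam p False
        \<le> ennreal p * lam g0 True + ennreal (1 - p) * lam g0 False"
    using PR p g0 unfolding proper_loss_def by auto
  have "ennreal p * lam g0 True + ennreal (1 - p) * lam g0 False < top"
    using g0 by (simp add: ennreal_mult_less_top)
  then have lt: "ennreal p * lam p True + ennreal (1 - p) * lam p False < top"
    using le by (rule le_less_trans[rotated])
  show ?thesis
  proof
    show "lam p True \<noteq> top"
    proof
      assume "lam p True = top"
      then have "ennreal p * lam p True = top" using p by simp
      then show False using lt by simp
    qed
    show "lam p False \<noteq> top"
    proof
      assume "lam p False = top"
      then have "ennreal (1-p) * lam p False = top" using p by simp
      then show False using lt by simp
    qed
  qed
qed

lemma end1:
  assumes LF: "loss_function lam" and PR: "proper_loss lam" and q: "q \<in> {0..1}"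
  shows "lam 1 True \<le> lam q True" "lam 1 True \<noteq> top"
proof -
  have "ennreal 1 * lam 1 True + ennreal (1 - 1) * lam 1 False
        \<le> ennreal 1 * lam q True + ennreal (1 - 1) * lam q False"
    if "q \<in> {0..1}" for q
    using PR that unfolding proper_loss_def by (metis atLeastAtMost_iff order_refl zero_le_one)
  then have *: "lam 1 True \<le> lam q True" if "q \<in> {0..1}" for q using that by simp
  show "lam 1 True \<le> lam q True" using *[OF q] .
  obtain g0 where g0: "g0 \<in> {0..1}" "lam g0 False < top" "lam g0 True < top"
    using fin_witness[OF LF] by blast
  show "lam 1 True \<noteq> top" using *[OF g0(1)] g0(3) by auto
qed

lemma end0:
  assumes LF: "loss_function lam" and PR: "proper_loss lam" and q: "q \<in> {0..1}"
  shows "lam 0 False \<le> lam q False" "lam 0 False \<noteq> top"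
proof -
  have "ennreal 0 * lam 0 True + ennreal (1 - 0) * lam 0 False
        \<le> ennreal 0 * lam q True + ennreal (1 - 0) * lam q False"
    if "q \<in> {0..1}" for q
    using PR that unfolding proper_loss_def by (metis atLeastAtMost_iff order_refl zero_le_one)
  then have *: "lam 0 False \<le> lam q False" if "q \<in> {0..1}" for q using that by simp
  show "lam 0 False \<le> lam q False" using *[OF q] .
  obtain g0 where g0: "g0 \<in> {0..1}" "lam g0 False < top" "lam g0 True < top"
    using fin_witness[OF LF] by blast
  show "lam 0 False \<noteq> top" using *[OF g0(1)] g0(2) by auto
qed

lemma lemmaA_int:
  assumes LF: "loss_function lam" and PR: "proper_loss lam" and eta: "eta > 0"
    and MX: "mixable lam eta"
    and p: "0 < p" "p < 1" and q: "0 < q" "q < 1"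
  shows "p * ephi eta (lam q True) / ephi eta (lam p True)
       + (1-p) * ephi eta (lam q False) / ephi eta (lam p False) \<le> 1"
proof -
  let ?E = "(\<lambda>(x, y). (exp (- eta * x), exp (- eta * y))) ` superpred lam"
  have cvx: "convex ?E" using MX by (simp add: mixable_def)
  have fp: "lam p True \<noteq> top" "lam p False \<noteq> top" using fin_interior[OF LF PR p] by auto
  have fq: "lam q True \<noteq> top" "lam q False \<noteq> top" using fin_interior[OF LF PR q] by auto
  define xa0 where "xa0 = enn2real (lam p False)"
  define xa1 where "xa1 = enn2real (lam p True)"
  define xb0 where "xb0 = enn2real (lam q False)"
  define xb1 where "xb1 = enn2real (lam q True)"
  have la: "lam p False = ennreal xa0" "lam p True = ennreal xa1" "xa0 \<ge> 0" "xa1 \<ge> 0"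
    using fp by (auto simp: xa0_def xa1_def less_top)
  have lb: "lam q False = ennreal xb0" "lam q True = ennreal xb1" "xb0 \<ge> 0" "xb1 \<ge> 0"
    using fq by (auto simp: xb0_def xb1_def less_top)
  define a0 where "a0 = exp (- eta * xa0)"
  define a1 where "a1 = exp (- eta * xa1)"
  define b0 where "b0 = exp (- eta * xb0)"
  define b1 where "b1 = exp (- eta * xb1)"
  have aE: "(a0, a1) \<in> ?E"
  proof -
    have "(xa0, xa1) \<in> superpred lam" unfolding superpred_def using la p
      by (auto intro!: bexI[of _ p])
    then show ?thesis unfolding a0_def a1_def by (intro image_eqI[of _ _ "(xa0,xa1)"]) simp_all
  qed
  have bE: "(b0, b1) \<in> ?E"
  proof -
    have "(xb0, xb1) \<in> superpred lam" unfolding superpred_def using lb q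
      by (auto intro!: bexI[of _ q])
    then show ?thesis unfolding b0_def b1_def by (intro image_eqI[of _ _ "(xb0,xb1)"]) simp_all
  qed
  have apos: "a0 > 0" "a1 > 0" and bpos: "b0 > 0" "b1 > 0" by (auto simp: a0_def a1_def b0_def b1_def)
  have H: "p * ln ((1-t)*a1 + t*b1) + (1-p) * ln ((1-t)*a0 + t*b0) \<le> p * ln a1 + (1-p) * ln a0"
    if t: "0 < t" "t \<le> 1" for t
  proof -
    have "(1-t) *\<^sub>R (a0, a1) + t *\<^sub>R (b0, b1) \<in> ?E"
      using convexD[OF cvx aE bE, of "1-t" t] t by auto
    then have "((1-t)*a0 + t*b0, (1-t)*a1 + t*b1) \<in> ?E" by simp
    then obtain x' y' where xy: "(x', y') \<in> superpred lam"
      and u0: "(1-t)*a0 + t*b0 = exp (- eta * x')" and u1: "(1-t)*a1 + t*b1 = exp (- eta * y')"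
      by auto
    from xy obtain g where g: "g \<in> {0..1}" "lam g False \<le> ennreal x'" "lam g True \<le> ennreal y'"
      "x' \<ge> 0" "y' \<ge> 0"
      unfolding superpred_def by auto
    have "ennreal p * lam p True + ennreal (1 - p) * lam p False
        \<le> ennreal p * lam g True + ennreal (1 - p) * lam g False"
      using PR p g unfolding proper_loss_def by auto
    also have "\<dots> \<le> ennreal p * ennreal y' + ennreal (1 - p) * ennreal x'"
      using g by (intro add_mono mult_left_mono) auto
    finally have le1: "ennreal p * ennreal xa1 + ennreal (1 - p) * ennreal xa0
        \<le> ennreal p * ennreal y' + ennreal (1 - p) * ennreal x'" using la by simp
    have eqa: "ennreal p * ennreal xa1 + ennreal (1 - p) * ennreal xa0 = ennreal (p * xa1 + (1-p) * xa0)"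
      using p la by (simp add: ennreal_mult ennreal_plus)
    have eqb: "ennreal p * ennreal y' + ennreal (1 - p) * ennreal x' = ennreal (p * y' + (1-p) * x')"
      using p g by (simp add: ennreal_mult ennreal_plus)
    have "ennreal (p * xa1 + (1-p) * xa0) \<le> ennreal (p * y' + (1-p) * x')"
      using le1 unfolding eqa eqb .
    then have ineq: "p * xa1 + (1-p) * xa0 \<le> p * y' + (1-p) * x'"
      using p g by (subst (asm) ennreal_le_iff) auto
    have "p * ln ((1-t)*a1 + t*b1) + (1-p) * ln ((1-t)*a0 + t*b0)
        = - eta * (p * y' + (1-p) * x')" unfolding u0 u1 by (simp add: algebra_simps)
    also have "\<dots> \<le> - eta * (p * xa1 + (1-p) * xa0)" using ineq eta by simp
    also have "\<dots> = p * ln a1 + (1-p) * ln a0" by (simp add: a0_def a1_def algebra_simps)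
    finally show ?thesis .
  qed
  have "p * b1 / a1 + (1-p) * b0 / a0 \<le> 1" by (rule real_key[OF apos bpos p H])
  then show ?thesis using fp fq la lb by (simp add: ephi_def a0_def a1_def b0_def b1_def)
qed



lemma lam_cont:
  assumes "loss_function lam" shows "continuous_on {0..1} (\<lambda>g. lam g b)"
  using assms unfolding loss_function_def by (cases b) auto

lemma e_cont:
  assumes "loss_function lam" "eta > 0"
  shows "continuous_on {0..1} (\<lambda>g. ephi eta (lam g b))"
  by (rule continuous_on_compose2[OF ephi_cont[OF assms(2)] lam_cont[OF assms(1)]]) auto

lemma ephi_anti:
  assumes "eta > 0" "x \<le> y" shows "ephi eta y \<le> ephi eta x"
proof (cases "y = top")
  case True then show ?thesis by (simp add: ephi_def)
next
  case False
  then have "x \<noteq> top" using assms(2) by (auto simp: top_unique)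
  moreover have "enn2real x \<le> enn2real y" using assms(2) False by (simp add: enn2real_mono less_top)
  ultimately show ?thesis using False assms(1) by (simp add: ephi_def)
qed

lemma lemmaA:
  assumes LF: "loss_function lam" and PR: "proper_loss lam" and eta: "eta > 0"
    and MX: "mixable lam eta"
    and p: "0 < p" "p < 1" and q: "q \<in> {0..1}"
  shows "p * ephi eta (lam q True) / ephi eta (lam p True)
       + (1-p) * ephi eta (lam q False) / ephi eta (lam p False) \<le> 1"
proof -
  let ?h = "\<lambda>q. p * ephi eta (lam q True) / ephi eta (lam p True)
       + (1-p) * ephi eta (lam q False) / ephi eta (lam p False)"
  have c: "continuous_on (closure {0<..<1}) ?h"
    using e_cont[OF LF eta, of True] e_cont[OF LF eta, of False] fin_interior[OF LF PR p]
    by (auto intro!: continuous_intros simp: ephi_zero_iff)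
  show ?thesis
    by (rule continuous_le_on_closure[OF c, of q 1])
       (use q lemmaA_int[OF LF PR eta MX p] in auto)
qed



definition fval :: "nat \<Rightarrow> (nat \<Rightarrow> real \<Rightarrow> bool \<Rightarrow> ennreal) \<Rightarrow> (nat \<Rightarrow> real)
   \<Rightarrow> (nat \<Rightarrow> real) \<Rightarrow> (nat \<Rightarrow> real) \<Rightarrow> real \<Rightarrow> bool \<Rightarrow> ennreal" where
  "fval N lam eta c q g b = (\<Sum>n\<in>{1..N}. ennreal (c n * ephi (eta n) (lam n (q n) b))
       * inverse (ennreal (ephi (eta n) (lam n g b))))"

definition good :: "nat \<Rightarrow> (nat \<Rightarrow> real \<Rightarrow> bool \<Rightarrow> ennreal) \<Rightarrow> (nat \<Rightarrow> real)
   \<Rightarrow> (nat \<Rightarrow> real) \<Rightarrow> (nat \<Rightarrow> real) \<Rightarrow> real \<Rightarrow> bool" where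
  "good N lam eta c q g \<longleftrightarrow> g \<in> {0..1} \<and>
     (\<forall>b. fval N lam eta c q g b \<le> ennreal (\<Sum>n\<in>{1..N}. c n))"

lemma term_eq: "y > 0 \<Longrightarrow> x \<ge> 0 \<Longrightarrow> ennreal x * inverse (ennreal y) = ennreal (x / y)"
  by (simp add: inverse_ennreal ennreal_mult[symmetric] divide_inverse)

lemma exists_good:
  assumes H: "\<forall>n\<in>{1..N}. loss_function (lam n) \<and> proper_loss (lam n) \<and> eta n > 0 \<and> mixable (lam n) (eta n)"
    and c: "\<forall>n\<in>{1..N}. c n \<ge> 0" and q: "\<forall>n\<in>{1..N}. q n \<in> {0..1}"
  shows "\<exists>g. good N lam eta c q g"
proof -
  define K where "K = (\<Sum>n\<in>{1..N}. c n)"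
  let ?e = "\<lambda>n g b. ephi (eta n) (lam n g b)"
  have epos: "?e n g b > 0" if "n \<in> {1..N}" "0 < g" "g < 1" for n g b
    using fin_interior[of "lam n" g] H that by (cases b) (auto intro!: ephi_pos)
  have fv: "fval N lam eta c q g b = ennreal (\<Sum>n\<in>{1..N}. c n * ?e n (q n) b / ?e n g b)"
    if "\<And>n. n \<in> {1..N} \<Longrightarrow> ?e n g b > 0" for g b
  proof -
    have "fval N lam eta c q g b = (\<Sum>n\<in>{1..N}. ennreal (c n * ?e n (q n) b / ?e n g b))"
      unfolding fval_def using that c by (intro sum.cong refl term_eq) (auto intro!: mult_nonneg_nonneg ephi_nonneg)
    also have "\<dots> = ennreal (\<Sum>n\<in>{1..N}. c n * ?e n (q n) b / ?e n g b)"
      using that c by (intro sum_ennreal) (auto intro!: divide_nonneg_nonneg mult_nonneg_nonneg ephi_nonneg)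
    finally show ?thesis .
  qed
  have int: "fval N lam eta c q p True \<le> ennreal K \<or> fval N lam eta c q p False \<le> ennreal K"
    if p: "0 < p" "p < 1" for p
  proof -
    define F1 where "F1 = (\<Sum>n\<in>{1..N}. c n * ?e n (q n) True / ?e n p True)"
    define F0 where "F0 = (\<Sum>n\<in>{1..N}. c n * ?e n (q n) False / ?e n p False)"
    have "p * F1 + (1-p) * F0 = (\<Sum>n\<in>{1..N}. c n * (p * ?e n (q n) True / ?e n p True
          + (1-p) * ?e n (q n) False / ?e n p False))"
      unfolding F1_def F0_def by (simp add: sum_distrib_left sum.distrib[symmetric] algebra_simps)
    also have "\<dots> \<le> (\<Sum>n\<in>{1..N}. c n * 1)"
      using c H q p by (intro sum_mono mult_left_mono lemmaA) auto
    finally have "p * F1 + (1-p) * F0 \<le> K" by (simp add: K_def)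
    moreover have "p * K + (1-p) * K = K" by (simp add: algebra_simps)
    ultimately have "F1 \<le> K \<or> F0 \<le> K"
    proof -
      assume a: "p * F1 + (1-p) * F0 \<le> K" "p * K + (1-p) * K = K"
      show ?thesis
      proof (rule ccontr)
        assume "\<not> (F1 \<le> K \<or> F0 \<le> K)"
        then have "K < F1" "K < F0" by auto
        then have "p * K < p * F1" "(1-p) * K < (1-p) * F0" using p by simp_all
        then show False using a by linarith
      qed
    qed
    moreover have "fval N lam eta c q p True = ennreal F1" "fval N lam eta c q p False = ennreal F0"
      unfolding F1_def F0_def using epos[OF _ p] by (intro fv; simp)+
    ultimately show ?thesis by (auto intro: ennreal_leI)
  qed
  have at1: "fval N lam eta c q 1 True \<le> ennreal K"
  proof -
    have "fval N lam eta c q 1 True \<le> (\<Sum>n\<in>{1..N}. ennreal (c n))"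
      unfolding fval_def
    proof (rule sum_mono)
      fix n assume n: "n \<in> {1..N}"
      have LF: "loss_function (lam n)" and PR: "proper_loss (lam n)" and et: "eta n > 0"
        using H n by auto
      have p1: "?e n 1 True > 0" using end1[OF LF PR, of 1] by (auto intro!: ephi_pos)
      have le: "?e n (q n) True \<le> ?e n 1 True"
        using ephi_anti[OF et end1(1)[OF LF PR, of "q n"]] q n by auto
      have "ennreal (c n * ?e n (q n) True) * inverse (ennreal (?e n 1 True))
          = ennreal (c n * ?e n (q n) True / ?e n 1 True)"
        using p1 c n by (intro term_eq) (auto intro!: mult_nonneg_nonneg ephi_nonneg)
      also have "\<dots> \<le> ennreal (c n)"
      proof (rule ennreal_leI)
        have "c n * ?e n (q n) True \<le> c n * ?e n 1 True" using le c n by (auto intro: mult_left_mono)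
        then show "c n * ?e n (q n) True / ?e n 1 True \<le> c n" using p1 by (simp add: divide_le_eq)
      qed
      finally show "ennreal (c n * ?e n (q n) True) * inverse (ennreal (?e n 1 True)) \<le> ennreal (c n)" .
    qed
    also have "\<dots> = ennreal K" unfolding K_def using c by (intro sum_ennreal) auto
    finally show ?thesis .
  qed
  have at0: "fval N lam eta c q 0 False \<le> ennreal K"
  proof -
    have "fval N lam eta c q 0 False \<le> (\<Sum>n\<in>{1..N}. ennreal (c n))"
      unfolding fval_def
    proof (rule sum_mono)
      fix n assume n: "n \<in> {1..N}"
      have LF: "loss_function (lam n)" and PR: "proper_loss (lam n)" and et: "eta n > 0"
        using H n by auto
      have p1: "?e n 0 False > 0" using end0[OF LF PR, of 0] by (auto intro!: ephi_pos)
      have le: "?e n (q n) False \<le> ?e n 0 False"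
        using ephi_anti[OF et end0(1)[OF LF PR, of "q n"]] q n by auto
      have "ennreal (c n * ?e n (q n) False) * inverse (ennreal (?e n 0 False))
          = ennreal (c n * ?e n (q n) False / ?e n 0 False)"
        using p1 c n by (intro term_eq) (auto intro!: mult_nonneg_nonneg ephi_nonneg)
      also have "\<dots> \<le> ennreal (c n)"
      proof (rule ennreal_leI)
        have "c n * ?e n (q n) False \<le> c n * ?e n 0 False" using le c n by (auto intro: mult_left_mono)
        then show "c n * ?e n (q n) False / ?e n 0 False \<le> c n" using p1 by (simp add: divide_le_eq)
      qed
      finally show "ennreal (c n * ?e n (q n) False) * inverse (ennreal (?e n 0 False)) \<le> ennreal (c n)" .
    qed
    also have "\<dots> = ennreal K" unfolding K_def using c by (intro sum_ennreal) auto
    finally show ?thesis .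
  qed
  have cont: "continuous_on {0..1} (\<lambda>g. fval N lam eta c q g b)" for b
    unfolding fval_def
  proof (intro continuous_on_sum ennreal_continuous_on_cmult continuous_on_inverse_ennreal continuous_on_ennreal)
    fix n assume n: "n \<in> {1..N}"
    show "ennreal (c n * ?e n (q n) b) < top" by simp
    show "continuous_on {0..1} (\<lambda>g. ?e n g b)" using H n by (intro e_cont) auto
  qed
  define A where "A = {0..1} \<inter> (\<lambda>g. fval N lam eta c q g True) -` {..ennreal K}"
  define B where "B = {0..1} \<inter> (\<lambda>g. fval N lam eta c q g False) -` {..ennreal K}"
  have cA: "closed A" unfolding A_def by (rule continuous_closed_preimage[OF cont]) auto
  have cB: "closed B" unfolding B_def by (rule continuous_closed_preimage[OF cont]) auto
  have cov: "{0..1::real} \<subseteq> A \<union> B"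
  proof
    fix g :: real assume g: "g \<in> {0..1}"
    show "g \<in> A \<union> B"
    proof (cases "g = 0 \<or> g = 1")
      case True then show ?thesis using at0 at1 by (auto simp: A_def B_def)
    next
      case False
      then have "0 < g" "g < 1" using g by auto
      then show ?thesis using int g by (auto simp: A_def B_def)
    qed
  qed
  have "(1::real) \<in> A \<inter> {0..1}" using at1 by (auto simp: A_def)
  then have "A \<inter> {0..1} \<noteq> {}" by blast
  moreover have "(0::real) \<in> B \<inter> {0..1}" using at0 by (auto simp: B_def)
  then have "B \<inter> {0..1} \<noteq> {}" by blast
  moreover have "connected {0..1::real}" by simp
  ultimately have "A \<inter> B \<inter> {0..1} \<noteq> {}"
    using cA cB cov unfolding connected_closed by blast
  then obtain g where "g \<in> A" "g \<in> B" by blast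
  then have "good N lam eta c q g" unfolding good_def A_def B_def K_def
    by (auto) (metis (full_types))
  then show ?thesis by blast
qed



definition pick :: "nat \<Rightarrow> (nat \<Rightarrow> real \<Rightarrow> bool \<Rightarrow> ennreal) \<Rightarrow> (nat \<Rightarrow> real)
   \<Rightarrow> (nat \<Rightarrow> real) \<Rightarrow> (nat \<Rightarrow> real) \<Rightarrow> real" where
  "pick N lam eta c q = (if \<exists>g. good N lam eta c q g then SOME g. good N lam eta c q g else 0)"

fun W :: "nat \<Rightarrow> (nat \<Rightarrow> real \<Rightarrow> bool \<Rightarrow> ennreal) \<Rightarrow> (nat \<Rightarrow> real)
   \<Rightarrow> nat \<Rightarrow> (nat \<Rightarrow> nat \<Rightarrow> real) \<Rightarrow> (nat \<Rightarrow> bool) \<Rightarrow> nat \<Rightarrow> real" where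
  "W N lam eta 0 g w = (\<lambda>n. 1)"
| "W N lam eta (Suc t) g w = (\<lambda>n. W N lam eta t g w n * ephi (eta n) (lam n (g (Suc t) n) (w (Suc t)))
      / ephi (eta n) (lam n (pick N lam eta (W N lam eta t g w) (g (Suc t))) (w (Suc t))))"

definition Strat :: "nat \<Rightarrow> (nat \<Rightarrow> real \<Rightarrow> bool \<Rightarrow> ennreal) \<Rightarrow> (nat \<Rightarrow> real)
   \<Rightarrow> nat \<Rightarrow> (nat \<Rightarrow> nat \<Rightarrow> real) \<Rightarrow> (nat \<Rightarrow> bool) \<Rightarrow> real" where
  "Strat N lam eta t g w = (if t = 0 then 0 else pick N lam eta (W N lam eta (t - 1) g w) (g t))"

lemma Strat_Suc: "Strat N lam eta (Suc t) g w = pick N lam eta (W N lam eta t g w) (g (Suc t))"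
  by (simp add: Strat_def)

lemma W_Suc': "W N lam eta (Suc t) g w n = W N lam eta t g w n * ephi (eta n) (lam n (g (Suc t) n) (w (Suc t)))
      / ephi (eta n) (lam n (Strat N lam eta (Suc t) g w) (w (Suc t)))"
  by (simp add: Strat_Suc)

lemma pick_range: "pick N lam eta c q \<in> {0..1}"
proof (cases "\<exists>g. good N lam eta c q g")
  case True
  then have g: "good N lam eta c q (SOME g. good N lam eta c q g)" by (rule someI_ex)
  have "(SOME g. good N lam eta c q g) \<in> {0..1}" using g unfolding good_def by blast
  then show ?thesis using True by (simp add: pick_def)
qed (simp add: pick_def)

lemma pick_good: "\<exists>g. good N lam eta c q g \<Longrightarrow> good N lam eta c q (pick N lam eta c q)"
  unfolding pick_def by (simp add: someI_ex)

lemma pick_cong: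
  assumes "\<forall>n\<in>{1..N}. c n = c' n \<and> q n = q' n"
  shows "pick N lam eta c q = pick N lam eta c' q'"
proof -
  have "fval N lam eta c q g b = fval N lam eta c' q' g b" for g b
    unfolding fval_def using assms by (intro sum.cong) auto
  moreover have "(\<Sum>n\<in>{1..N}. c n) = (\<Sum>n\<in>{1..N}. c' n)" using assms by (intro sum.cong) auto
  ultimately have "good N lam eta c q = good N lam eta c' q'" by (intro ext) (simp add: good_def)
  then show ?thesis by (simp add: pick_def)
qed

lemma W_cong:
  "(\<forall>s\<in>{1..t}. \<forall>n\<in>{1..N}. g s n = g' s n) \<and> (\<forall>s\<in>{1..t}. w s = w' s)
   \<Longrightarrow> \<forall>n\<in>{1..N}. W N lam eta t g w n = W N lam eta t g' w' n"
proof (induction t)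
  case 0 then show ?case by simp
next
  case (Suc t)
  then have IH: "\<forall>n\<in>{1..N}. W N lam eta t g w n = W N lam eta t g' w' n" by auto
  have p: "pick N lam eta (W N lam eta t g w) (g (Suc t)) = pick N lam eta (W N lam eta t g' w') (g' (Suc t))"
    using IH Suc.prems by (intro pick_cong) auto
  show ?case using IH Suc.prems p by (auto simp del: W.simps simp: W.simps(2))
qed

lemma learner: "learner_strategy N (Strat N lam eta)"
  unfolding learner_strategy_def
proof (intro conjI allI impI)
  fix t :: nat and g w show "Strat N lam eta t g w \<in> {0..1}"
    using pick_range[of N lam eta "W N lam eta (t-1) g w" "g t"] by (auto simp: Strat_def)
next
  fix t :: nat and g g' :: "nat \<Rightarrow> nat \<Rightarrow> real" and w w' :: "nat \<Rightarrow> bool"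
  assume a: "(\<forall>s\<in>{1..t}. \<forall>n\<in>{1..N}. g s n = g' s n) \<and> (\<forall>s\<in>{1..<t}. w s = w' s)"
  show "Strat N lam eta t g w = Strat N lam eta t g' w'"
  proof (cases t)
    case 0 then show ?thesis by (simp add: Strat_def)
  next
    case (Suc k)
    have "\<forall>n\<in>{1..N}. W N lam eta k g w n = W N lam eta k g' w' n"
      using a Suc by (intro W_cong) auto
    then show ?thesis unfolding Suc Strat_Suc using a Suc by (intro pick_cong) auto
  qed
qed

lemma term_fin:
  assumes "x \<ge> 0" "y \<ge> 0" "ennreal x * inverse (ennreal y) < top"
  shows "ennreal x * inverse (ennreal y) = ennreal (x / y) \<and> (y = 0 \<longrightarrow> x = 0)"
proof (cases "y = 0")
  case True
  then have "x = 0" using assms by (auto simp: ennreal_mult_top split: if_splits)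
  then show ?thesis using True by simp
next
  case False then show ?thesis using assms term_eq by auto
qed

lemma ephi_add: "ephi eta (a + b) = ephi eta a * ephi eta b"
proof (cases "a = top \<or> b = top")
  case True then show ?thesis by (auto simp: ephi_def)
next
  case False
  then have "a + b \<noteq> top" by (simp add: ennreal_add_eq_top)
  then show ?thesis using False
    by (simp add: ephi_def enn2real_plus less_top exp_add[symmetric] algebra_simps)
qed

lemma ephi_sum: "finite I \<Longrightarrow> (\<Prod>s\<in>I. ephi eta (x s)) = ephi eta (\<Sum>s\<in>I. x s)"
proof (induction I rule: finite_induct)
  case empty then show ?case by (simp add: ephi_def)
next
  case (insert a F) then show ?case by (simp add: ephi_add)
qed

lemma final_conv:
  assumes eta: "eta > 0" and N: "N \<ge> (1::nat)" and le: "ephi eta X \<le> real N * ephi eta Y"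
  shows "Y \<le> X + ennreal (ln (real N) / eta)"
proof (cases "X = top")
  case True then show ?thesis by simp
next
  case False
  then have "ephi eta X > 0" by (rule ephi_pos)
  then have "ephi eta Y \<noteq> 0" using le by auto
  then have "ephi eta Y > 0" using ephi_nonneg[of eta Y] by linarith
  then have Yf: "Y \<noteq> top" by (auto simp: ephi_def)
  define x where "x = enn2real X"
  define y where "y = enn2real Y"
  have X: "X = ennreal x" "x \<ge> 0" using False by (auto simp: x_def less_top)
  have Y: "Y = ennreal y" "y \<ge> 0" using Yf by (auto simp: y_def less_top)
  have "exp (- eta * x) \<le> real N * exp (- eta * y)" using le X Y by (simp add: ephi_def)
  then have "ln (exp (- eta * x)) \<le> ln (real N * exp (- eta * y))" using N by (subst ln_le_cancel_iff) auto
  then have "- eta * x \<le> ln (real N) - eta * y" using N by (simp add: ln_mult)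
  then have "y \<le> x + ln (real N) / eta" using eta by (simp add: field_simps)
  then have "ennreal y \<le> ennreal (x + ln (real N) / eta)" by (rule ennreal_leI)
  also have "\<dots> = ennreal x + ennreal (ln (real N) / eta)" using X N eta by (intro ennreal_plus) auto
  finally show ?thesis using X Y by simp
qed



lemma invariant:
  assumes H: "\<forall>n\<in>{1..N}. loss_function (lam n) \<and> proper_loss (lam n) \<and> eta n > 0 \<and> mixable (lam n) (eta n)"
    and gr: "\<forall>s. \<forall>n\<in>{1..N}. g s n \<in> {0..1}"
  shows "(\<forall>n\<in>{1..N}. W N lam eta t g w n \<ge> 0) \<and> (\<Sum>n\<in>{1..N}. W N lam eta t g w n) \<le> real N \<and>
    (\<forall>n\<in>{1..N}. W N lam eta t g w n * (\<Prod>s\<in>{1..t}. ephi (eta n) (lam n (Strat N lam eta s g w) (w s)))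
       = (\<Prod>s\<in>{1..t}. ephi (eta n) (lam n (g s n) (w s))))"
proof (induction t)
  case 0 then show ?case by simp
next
  case (Suc t)
  define c where "c = W N lam eta t g w"
  define q where "q = g (Suc t)"
  define ga where "ga = Strat N lam eta (Suc t) g w"
  define om where "om = w (Suc t)"
  let ?e = "\<lambda>n x. ephi (eta n) (lam n x om)"
  have c0: "\<forall>n\<in>{1..N}. c n \<ge> 0" and cs: "(\<Sum>n\<in>{1..N}. c n) \<le> real N"
    and cp: "\<forall>n\<in>{1..N}. c n * (\<Prod>s\<in>{1..t}. ephi (eta n) (lam n (Strat N lam eta s g w) (w s)))
       = (\<Prod>s\<in>{1..t}. ephi (eta n) (lam n (g s n) (w s)))"
    using Suc.IH by (auto simp: c_def)
  have gaeq: "ga = pick N lam eta c q" by (simp add: ga_def c_def q_def Strat_Suc)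
  have "good N lam eta c q ga" unfolding gaeq
    by (rule pick_good, rule exists_good[OF H c0]) (use gr in \<open>auto simp: q_def\<close>)
  then have fb: "fval N lam eta c q ga om \<le> ennreal (\<Sum>n\<in>{1..N}. c n)" by (simp add: good_def)
  have Wn: "W N lam eta (Suc t) g w n = c n * ?e n (q n) / ?e n ga" for n
    by (simp only: W_Suc' c_def q_def ga_def om_def)
  have tn: "ennreal (c n * ?e n (q n)) * inverse (ennreal (?e n ga)) = ennreal (c n * ?e n (q n) / ?e n ga)
      \<and> (?e n ga = 0 \<longrightarrow> c n * ?e n (q n) = 0)" if n: "n \<in> {1..N}" for n
  proof (rule term_fin)
    show "0 \<le> c n * ?e n (q n)" using c0 n by (auto intro!: mult_nonneg_nonneg ephi_nonneg)
    show "0 \<le> ?e n ga" by (rule ephi_nonneg)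
    have "ennreal (c n * ?e n (q n)) * inverse (ennreal (?e n ga)) \<le> fval N lam eta c q ga om"
      unfolding fval_def by (rule member_le_sum) (use n in auto)
    also have "\<dots> < top" using fb by (simp add: le_less_trans)
    finally show "ennreal (c n * ?e n (q n)) * inverse (ennreal (?e n ga)) < top" .
  qed
  have "fval N lam eta c q ga om = (\<Sum>n\<in>{1..N}. ennreal (W N lam eta (Suc t) g w n))"
    unfolding fval_def Wn using tn by (intro sum.cong) auto
  also have "\<dots> = ennreal (\<Sum>n\<in>{1..N}. W N lam eta (Suc t) g w n)"
    using c0 unfolding Wn by (intro sum_ennreal) (auto intro!: divide_nonneg_nonneg mult_nonneg_nonneg ephi_nonneg)
  finally have "ennreal (\<Sum>n\<in>{1..N}. W N lam eta (Suc t) g w n) \<le> ennreal (\<Sum>n\<in>{1..N}. c n)"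
    using fb by simp
  then have s1: "(\<Sum>n\<in>{1..N}. W N lam eta (Suc t) g w n) \<le> (\<Sum>n\<in>{1..N}. c n)"
    using c0 by (subst (asm) ennreal_le_iff) (auto intro: sum_nonneg)
  have nn: "\<forall>n\<in>{1..N}. W N lam eta (Suc t) g w n \<ge> 0"
    using c0 unfolding Wn by (auto intro!: divide_nonneg_nonneg mult_nonneg_nonneg ephi_nonneg)
  have ins: "{1..Suc t} = insert (Suc t) {1..t}" by auto
  have pr: "W N lam eta (Suc t) g w n * (\<Prod>s\<in>{1..Suc t}. ephi (eta n) (lam n (Strat N lam eta s g w) (w s)))
       = (\<Prod>s\<in>{1..Suc t}. ephi (eta n) (lam n (g s n) (w s)))" if n: "n \<in> {1..N}" for n
  proof -
    let ?B = "\<Prod>s\<in>{1..t}. ephi (eta n) (lam n (Strat N lam eta s g w) (w s))"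
    let ?A = "\<Prod>s\<in>{1..t}. ephi (eta n) (lam n (g s n) (w s))"
    have l: "(\<Prod>s\<in>{1..Suc t}. ephi (eta n) (lam n (Strat N lam eta s g w) (w s))) = ?e n ga * ?B"
      unfolding ins by (simp add: ga_def om_def)
    have r: "(\<Prod>s\<in>{1..Suc t}. ephi (eta n) (lam n (g s n) (w s))) = ?e n (q n) * ?A"
      unfolding ins by (simp add: q_def om_def)
    have cpn: "c n * ?B = ?A" using cp n by auto
    show ?thesis
    proof (cases "?e n ga = 0")
      case True
      then have "c n * ?e n (q n) = 0" using tn[OF n] by auto
      then have "?e n (q n) * ?A = 0" using cpn by (metis mult.commute mult.left_commute mult_zero_left)
      then show ?thesis unfolding l r using True by simp
    next
      case False
      then show ?thesis unfolding l r Wn using cpn by (simp add: field_simps)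
    qed
  qed
  show ?case using nn s1 cs pr by auto
qed

theorem corollary2:
  fixes N :: nat and lam :: "nat \<Rightarrow> real \<Rightarrow> bool \<Rightarrow> ennreal" and eta :: "nat \<Rightarrow> real"
  assumes "N \<ge> 1"
    and "\<forall>n\<in>{1..N}. loss_function (lam n) \<and> proper_loss (lam n) \<and> eta n > 0 \<and> mixable (lam n) (eta n)"
  shows "\<exists>S. learner_strategy N S \<and>
     (\<forall>g w. (\<forall>s. \<forall>n\<in>{1..N}. g s n \<in> {0..1}) \<longrightarrow>
        (\<forall>T. \<forall>n\<in>{1..N}.
           (\<Sum>t\<in>{1..T}. lam n (S t g w) (w t))
           \<le> (\<Sum>t\<in>{1..T}. lam n (g t n) (w t)) + ennreal (ln (real N) / eta n)))"
proof (intro exI conjI allI impI ballI)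
  show "learner_strategy N (Strat N lam eta)" by (rule learner)
next
  fix g :: "nat \<Rightarrow> nat \<Rightarrow> real" and w :: "nat \<Rightarrow> bool" and T n :: nat
  assume gr: "\<forall>s. \<forall>n\<in>{1..N}. g s n \<in> {0..1}" and n: "n \<in> {1..N}"
  have et: "eta n > 0" using assms(2) n by auto
  have inv: "(\<forall>n\<in>{1..N}. W N lam eta T g w n \<ge> 0) \<and> (\<Sum>n\<in>{1..N}. W N lam eta T g w n) \<le> real N \<and>
    (\<forall>n\<in>{1..N}. W N lam eta T g w n * (\<Prod>s\<in>{1..T}. ephi (eta n) (lam n (Strat N lam eta s g w) (w s)))
       = (\<Prod>s\<in>{1..T}. ephi (eta n) (lam n (g s n) (w s))))"
    by (rule invariant[OF assms(2) gr])
  let ?B = "\<Prod>s\<in>{1..T}. ephi (eta n) (lam n (Strat N lam eta s g w) (w s))"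
  let ?A = "\<Prod>s\<in>{1..T}. ephi (eta n) (lam n (g s n) (w s))"
  have Bnn: "?B \<ge> 0" by (intro prod_nonneg) (simp add: ephi_nonneg)
  have "W N lam eta T g w n \<le> (\<Sum>n\<in>{1..N}. W N lam eta T g w n)"
    by (rule member_le_sum) (use n inv in auto)
  then have Wle: "W N lam eta T g w n \<le> real N" using inv by linarith
  have "?A = W N lam eta T g w n * ?B" using inv n by auto
  also have "\<dots> \<le> real N * ?B" using Wle Bnn by (rule mult_right_mono)
  finally have "?A \<le> real N * ?B" .
  then have "ephi (eta n) (\<Sum>t\<in>{1..T}. lam n (g t n) (w t))
      \<le> real N * ephi (eta n) (\<Sum>t\<in>{1..T}. lam n (Strat N lam eta t g w) (w t))"
    by (simp add: ephi_sum)
  then show "(\<Sum>t\<in>{1..T}. lam n (Strat N lam eta t g w) (w t))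
           \<le> (\<Sum>t\<in>{1..T}. lam n (g t n) (w t)) + ennreal (ln (real N) / eta n)"
    by (rule final_conv[OF et assms(1)])
qed

end
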